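(* $T(2,\omega^2)=4$.
   Context: $[c]=\{1,\dots,c\}$. Each ordinal $\alpha$ is identified with the linearly ordered set of ordinals $\beta<\alpha$; $\omega^2$ is the set of ordinals $\omega\cdot a+b$ with $a,b\in\mathbb{N}$, ordered lexicographically. $\binom{S}{n}$ is the set of $n$-element subsets of $S$. $\approx$ denotes order-equivalence. For a linearly ordered set $S$ and $n\in\mathbb{N}$, $T(n,S)$ is the least $t\in\mathbb{N}$ such that for every $c\ge 1$ and every coloring $\mathrm{COL}:\binom{S}{n}\to[c]$ there exists $S'\subseteq S$ with $S'\approx S$ and $|\mathrm{COL}(\binom{S'}{n})|\le t$ (or $\infty$ if no such $t$ exists). *)

theory Defs
  imports Main "HOL-Library.Product_Lexorder" "HOL-Library.Extended_Nat"
begin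

definition order_equiv :: "'a::linorder set \<Rightarrow> 'a set \<Rightarrow> bool" where
  "order_equiv A B \<longleftrightarrow> (\<exists>f. bij_betw f A B \<and> strict_mono_on A f)"

definition nsubsets :: "'a set \<Rightarrow> nat \<Rightarrow> 'a set set" where
  "nsubsets S n = {X. X \<subseteq> S \<and> finite X \<and> card X = n}"

definition T_bound :: "nat \<Rightarrow> 'a::linorder set \<Rightarrow> nat \<Rightarrow> bool" where
  "T_bound n S t \<longleftrightarrow>
     (\<forall>c::nat. c \<ge> 1 \<longrightarrow> (\<forall>COL :: 'a set \<Rightarrow> nat.
        COL ` nsubsets S n \<subseteq> {1..c} \<longrightarrow>
        (\<exists>S'. S' \<subseteq> S \<and> order_equiv S' S \<and> card (COL ` nsubsets S' n) \<le> t)))"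

definition T :: "nat \<Rightarrow> 'a::linorder set \<Rightarrow> enat" where
  "T n S = (if \<exists>t. T_bound n S t then enat (LEAST t. T_bound n S t) else \<infinity>)"

text \<open>omega^2 realised as nat \<times> nat with the lexicographic order:
  (a,b) corresponds to the ordinal omega*a+b.\<close>
definition omega2 :: "(nat \<times> nat) set" where
  "omega2 = UNIV"

end

theory Submission
  imports Defs "HOL-Library.Ramsey" "HOL-Library.Nat_Bijection"
begin

lemma fin_below: "finite {z::nat\<times>nat. z < y \<and> (fst z = fst y \<or> snd z \<le> N)}"
  by (rule finite_subset[of _ "{..fst y} \<times> {..max (snd y) N}"]) (auto simp: less_prod_def')

lemma inf_row: "strict_mono (g::nat\<times>nat \<Rightarrow> nat\<times>nat) \<Longrightarrow> infinite (range (\<lambda>k. g (i,k)))"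
  by (rule range_inj_infinite) (auto simp: inj_on_def strict_mono_eq)

lemma pick_below:
  fixes g :: "nat\<times>nat \<Rightarrow> nat\<times>nat"
  assumes "strict_mono g" "\<forall>k. g (i,k) < y"
  shows "\<exists>k. fst (g (i,k)) \<noteq> fst y \<and> snd (g (i,k)) > M"
proof (rule ccontr)
  assume "\<not> ?thesis"
  then have "range (\<lambda>k. g (i,k)) \<subseteq> {z. z < y \<and> (fst z = fst y \<or> snd z \<le> M)}"
    using assms(2) by (auto simp: not_less)
  then show False using finite_subset[OF _ fin_below] inf_row[OF assms(1)] by blast
qed

lemma g_le: "strict_mono (g::nat\<times>nat \<Rightarrow> nat\<times>nat) \<Longrightarrow> p \<le> q \<Longrightarrow> fst (g p) \<le> fst (g q)"
  using strict_mono_less_eq[of g p q] by (auto simp: less_eq_prod_def)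

lemma row_block:
  fixes g :: "nat\<times>nat \<Rightarrow> nat\<times>nat"
  assumes "strict_mono g"
  shows "\<exists>n0. \<forall>n\<ge>n0. fst (g (i,n)) = fst (g (i,n0))"
proof -
  define B where "B = fst (g (Suc i, 0))"
  have bd: "fst (g (i,n)) \<le> B" for n
    unfolding B_def by (rule g_le[OF assms]) simp
  define S where "S = range (\<lambda>n. fst (g (i,n)))"
  have fS: "finite S" using bd by (auto simp: S_def intro: finite_subset[of _ "{..B}"])
  have "Max S \<in> S" using fS by (intro Max_in) (auto simp: S_def)
  then obtain n0 where n0: "fst (g (i,n0)) = Max S" by (auto simp: S_def)
  have "fst (g (i,n)) = fst (g (i,n0))" if "n \<ge> n0" for n
  proof -
    have "fst (g (i,n0)) \<le> fst (g (i,n))" by (rule g_le[OF assms]) (use that in simp)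
    moreover have "fst (g (i,n)) \<le> Max S" using fS by (auto simp: S_def)
    ultimately show ?thesis using n0 by simp
  qed
  then show ?thesis by blast
qed

lemma block_grow:
  fixes g :: "nat\<times>nat \<Rightarrow> nat\<times>nat"
  assumes "strict_mono g" "\<forall>n\<ge>n0. fst (g (i,n)) = fst (g (i,n0))"
  shows "snd (g (i, n0 + k)) \<ge> k + snd (g (i,n0))"
proof (induction k)
  case 0 then show ?case by simp
next
  case (Suc k)
  have "g (i, n0+k) < g (i, n0 + Suc k)" using assms(1) by (simp add: strict_mono_less)
  moreover have "fst (g (i, n0+k)) = fst (g (i, n0 + Suc k))" using assms(2)[rule_format, of "n0+k"] assms(2)[rule_format, of "n0 + Suc k"] by simp
  ultimately have "snd (g (i, n0+k)) < snd (g (i, n0 + Suc k))" by (auto simp: less_prod_def')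
  then show ?case using Suc by simp
qed

lemma fst_step:
  fixes g :: "nat\<times>nat \<Rightarrow> nat\<times>nat"
  assumes "strict_mono g"
  shows "fst (g (i,0)) < fst (g (Suc i,0))"
proof -
  have le: "fst (g (i,0)) \<le> fst (g (Suc i,0))" by (rule g_le[OF assms]) simp
  have lt: "\<forall>k. g (i,k) < g (Suc i,0)" using assms by (simp add: strict_mono_less)
  obtain k where k: "fst (g (i,k)) \<noteq> fst (g (Suc i,0))"
    using pick_below[OF assms lt, of 0] by blast
  have "fst (g (i,0)) \<le> fst (g (i,k))" by (rule g_le[OF assms]) simp
  moreover have "fst (g (i,k)) \<le> fst (g (Suc i,0))" by (rule g_le[OF assms]) simp
  ultimately show ?thesis using le k by linarith
qed

lemma fst_ge:
  fixes g :: "nat\<times>nat \<Rightarrow> nat\<times>nat"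
  assumes "strict_mono g"
  shows "fst (g (i,0)) \<ge> i"
proof (induction i)
  case 0 then show ?case by simp
next
  case (Suc i) then show ?case using fst_step[OF assms, of i] by simp
qed

definition pc :: "nat\<times>nat \<Rightarrow> nat\<times>nat \<Rightarrow> nat" where
  "pc x y = (if fst x = fst y then 1 else if snd x < fst y \<and> snd x < snd y then 2
             else if snd x < snd y then 3 else 4)"

lemma colors_forced:
  fixes g :: "nat\<times>nat \<Rightarrow> nat\<times>nat"
  assumes g: "strict_mono g"
  shows "\<forall>col\<in>{1,2,3,4}. \<exists>x y. x \<in> range g \<and> y \<in> range g \<and> x < y \<and> pc x y = col"
proof -
  have W: "\<exists>x y. x \<in> range g \<and> y \<in> range g \<and> x < y \<and> pc x y = col"
    if "x \<in> range g" "y \<in> range g" "x < y" "pc x y = col" for x y col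
    using that by blast
  have A: "\<exists>x y. x \<in> range g \<and> y \<in> range g \<and> x < y \<and> pc x y = 1"
  proof -
    obtain n0 where n0: "\<forall>n\<ge>n0. fst (g (0,n)) = fst (g (0,n0))" using row_block[OF g] by blast
    have "g (0,n0) < g (0, Suc n0)" using g by (simp add: strict_mono_less)
    moreover have "fst (g (0,n0)) = fst (g (0, Suc n0))" using n0[rule_format, of "Suc n0"] by simp
    then have "pc (g (0,n0)) (g (0, Suc n0)) = 1" by (simp add: pc_def)
    ultimately show ?thesis by (intro W) auto
  qed
  have B: "\<exists>x y. x \<in> range g \<and> y \<in> range g \<and> x < y \<and> pc x y = 2"
  proof -
    define x where "x = g (0,0)"
    define i where "i = fst x + snd x + 1"
    obtain n0 where n0: "\<forall>n\<ge>n0. fst (g (i,n)) = fst (g (i,n0))" using row_block[OF g] by blast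
    define y where "y = g (i, n0 + (snd x + 1))"
    have "snd y \<ge> snd x + 1 + snd (g (i,n0))" using block_grow[OF g n0, of "snd x + 1"] by (simp add: y_def)
    then have 1: "snd y > snd x" by simp
    have "fst (g (i,0)) \<le> fst y" unfolding y_def by (rule g_le[OF g]) simp
    then have 2: "fst y \<ge> i" using fst_ge[OF g, of i] by simp
    have "x < y" unfolding y_def x_def using g by (simp add: strict_mono_less i_def)
    moreover have "pc x y = 2" using 1 2 by (simp add: pc_def i_def)
    moreover have "x \<in> range g" "y \<in> range g" by (simp_all add: x_def y_def)
    ultimately show ?thesis by (intro W) auto
  qed
  obtain n0 where n0: "\<forall>n\<ge>n0. fst (g (1,n)) = fst (g (1,n0))" using row_block[OF g] by blast
  define y0 where "y0 = g (1,n0)"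
  have below: "\<forall>k. g (0,k) < y0" using g by (simp add: strict_mono_less y0_def)
  have C: "\<exists>x y. x \<in> range g \<and> y \<in> range g \<and> x < y \<and> pc x y = 3"
  proof -
    obtain k where k: "fst (g (0,k)) \<noteq> fst y0" "snd (g (0,k)) > fst y0"
      using pick_below[OF g below] by blast
    define x where "x = g (0,k)"
    have kx: "fst x \<noteq> fst y0" "snd x > fst y0" using k by (simp_all add: x_def)
    have "fst x \<le> fst y0" unfolding x_def y0_def by (rule g_le[OF g]) simp
    define y where "y = g (1, n0 + (snd x + 1))"
    have "snd y \<ge> snd x + 1 + snd y0" using block_grow[OF g n0, of "snd x + 1"] by (simp add: y_def y0_def)
    moreover have "fst y = fst y0" using n0[rule_format, of "n0 + (snd x + 1)"] by (simp add: y_def y0_def)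
    ultimately have "pc x y = 3" using kx by (simp add: pc_def)
    moreover have "x < y" unfolding y_def x_def using g by (simp add: strict_mono_less)
    moreover have "x \<in> range g" "y \<in> range g" by (simp_all add: x_def y_def)
    ultimately show ?thesis by (intro W) auto
  qed
  have D: "\<exists>x y. x \<in> range g \<and> y \<in> range g \<and> x < y \<and> pc x y = 4"
  proof -
    obtain k where k: "fst (g (0,k)) \<noteq> fst y0" "snd (g (0,k)) > max (fst y0) (snd y0)"
      using pick_below[OF g below] by blast
    define x where "x = g (0,k)"
    have kx: "fst x \<noteq> fst y0" "snd x > fst y0" "snd x > snd y0" using k by (simp_all add: x_def)
    have "pc x y0 = 4" using kx by (simp add: pc_def)
    moreover have "x < y0" using below by (simp add: x_def)
    moreover have "x \<in> range g" "y0 \<in> range g" by (simp_all add: x_def y0_def)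
    ultimately show ?thesis by (intro W) auto
  qed
  show ?thesis using A B C D by blast
qed

lemma oe_g:
  fixes S' :: "(nat\<times>nat) set"
  assumes "order_equiv S' UNIV"
  shows "\<exists>g :: nat\<times>nat \<Rightarrow> nat\<times>nat. strict_mono g \<and> range g \<subseteq> S'"
proof -
  obtain f :: "nat\<times>nat \<Rightarrow> nat\<times>nat" where bf: "bij_betw f S' UNIV" and sm: "strict_mono_on S' f"
    using assms unfolding order_equiv_def by blast
  define g where "g = inv_into S' f"
  have im: "x \<in> f ` S'" for x using bf by (simp add: bij_betw_def)
  have gin: "g x \<in> S'" for x unfolding g_def by (rule inv_into_into[OF im])
  have fg: "f (g x) = x" for x unfolding g_def by (rule f_inv_into_f[OF im])
  have "g p < g q" if pq: "p < q" for p q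
  proof (rule ccontr)
    assume "\<not> g p < g q"
    then have "g q < g p \<or> g q = g p" by (meson not_less_iff_gr_or_eq)
    then show False
    proof
      assume "g q < g p"
      then have "f (g q) < f (g p)" by (rule strict_mono_onD[OF sm gin gin])
      then have "q < p" by (simp only: fg)
      then show False using pq by (meson less_asym)
    next
      assume "g q = g p" then have "f (g q) = f (g p)" by (rule arg_cong)
      then have "q = p" by (simp only: fg)
      then show False using pq by (meson less_irrefl)
    qed
  qed
  then have "strict_mono g" by (rule strict_monoI)
  moreover have "range g \<subseteq> S'" using gin by (simp add: image_subset_iff)
  ultimately show ?thesis by (intro exI[of _ g] conjI)
qed

lemma lower:
  assumes "T_bound 2 omega2 t"
  shows "4 \<le> t"
proof -
  define COL0 where "COL0 = (\<lambda>X::(nat\<times>nat) set. pc (Min X) (Max X))"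
  have im: "COL0 ` nsubsets omega2 2 \<subseteq> {1..4}" by (auto simp: COL0_def pc_def)
  obtain S' where S': "S' \<subseteq> omega2" "order_equiv S' omega2" "card (COL0 ` nsubsets S' 2) \<le> t"
  proof -
    have H: "\<forall>COL::(nat\<times>nat) set \<Rightarrow> nat. COL ` nsubsets omega2 2 \<subseteq> {1..4} \<longrightarrow>
        (\<exists>S'. S' \<subseteq> omega2 \<and> order_equiv S' omega2 \<and> card (COL ` nsubsets S' 2) \<le> t)"
      using spec[OF assms[unfolded T_bound_def], of 4] by simp
    have "\<exists>S'. S' \<subseteq> omega2 \<and> order_equiv S' omega2 \<and> card (COL0 ` nsubsets S' 2) \<le> t"
      using mp[OF spec[OF H, of COL0] im] .
    then show ?thesis using that by blast
  qed
  have "order_equiv S' UNIV" using S'(2) by (simp add: omega2_def)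
  then obtain g :: "nat\<times>nat \<Rightarrow> nat\<times>nat" where g: "strict_mono g" "range g \<subseteq> S'" using oe_g by blast
  have sub: "{1,2,3,4} \<subseteq> COL0 ` nsubsets S' 2"
  proof
    fix col :: nat assume "col \<in> {1,2,3,4}"
    then obtain x y where xy: "x \<in> range g" "y \<in> range g" "x < y" "pc x y = col"
      using colors_forced[OF g(1)] by blast
    have "{x,y} \<in> nsubsets S' 2" using xy g(2) by (auto simp: nsubsets_def)
    moreover have "COL0 {x,y} = col" using xy by (auto simp: COL0_def)
    ultimately show "col \<in> COL0 ` nsubsets S' 2" by force
  qed
  have fin: "finite (COL0 ` nsubsets S' 2)"
    by (rule finite_subset[of _ "{1..4}"]) (auto simp: COL0_def pc_def)
  have "card {1,2,3,4::nat} \<le> card (COL0 ` nsubsets S' 2)" by (rule card_mono[OF fin sub])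
  then show ?thesis using S'(3) by simp
qed

lemma sorted3: "(u::nat) < v \<Longrightarrow> v < w \<Longrightarrow> sorted_list_of_set {u,v,w} = [u,v,w]"
  by (rule sorted_list_of_set_unique[THEN iffD1]) auto

lemma sorted4: "(u::nat) < v \<Longrightarrow> v < w \<Longrightarrow> w < z \<Longrightarrow> sorted_list_of_set {u,v,w,z} = [u,v,w,z]"
  by (rule sorted_list_of_set_unique[THEN iffD1]) auto

lemma triangle_less: "a < b \<Longrightarrow> triangle a < triangle b"
  by (rule lift_Suc_mono_less[of triangle]) auto

lemma pe_less: "j < j' \<Longrightarrow> prod_encode (i,j) < prod_encode (i,j')"
  using triangle_less[of "i+j" "i+j'"] by (simp add: prod_encode_def)

lemma L4:
  fixes X :: "nat set"
  assumes "finite X" "card X = 4"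
  shows "sorted_list_of_set X ! 0 \<noteq> sorted_list_of_set X ! 2"
    "sorted_list_of_set X ! 0 \<noteq> sorted_list_of_set X ! 3"
    "sorted_list_of_set X ! 1 \<noteq> sorted_list_of_set X ! 2"
    "sorted_list_of_set X ! 0 \<noteq> sorted_list_of_set X ! 1"
proof -
  have "distinct (sorted_list_of_set X)" "length (sorted_list_of_set X) = 4"
    using assms by auto
  then show "sorted_list_of_set X ! 0 \<noteq> sorted_list_of_set X ! 2"
    "sorted_list_of_set X ! 0 \<noteq> sorted_list_of_set X ! 3"
    "sorted_list_of_set X ! 1 \<noteq> sorted_list_of_set X ! 2"
    "sorted_list_of_set X ! 0 \<noteq> sorted_list_of_set X ! 1"
    by (simp_all add: nth_eq_iff_index_eq)
qed

lemma L3: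
  fixes X :: "nat set"
  assumes "finite X" "card X = 3"
  shows "sorted_list_of_set X ! 1 \<noteq> sorted_list_of_set X ! 2"
proof -
  have "distinct (sorted_list_of_set X)" "length (sorted_list_of_set X) = 3"
    using assms by auto
  then show ?thesis by (simp add: nth_eq_iff_index_eq)
qed

lemma use_R: "\<forall>X. X \<subseteq> Y \<and> finite X \<and> card X = n \<longrightarrow> F X = t \<Longrightarrow> X \<subseteq> Y \<Longrightarrow> finite X \<Longrightarrow> card X = n \<Longrightarrow> F X = t"
  by blast

lemma card4: "(a::nat) < b \<Longrightarrow> b < c \<Longrightarrow> c < d \<Longrightarrow> card {a,b,c,d} = 4"
  by (simp add: card_insert_if)

lemma card3: "(a::nat) < b \<Longrightarrow> b < c \<Longrightarrow> card {a,b,c} = 3"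
  by (simp add: card_insert_if)

lemma upper: "T_bound 2 omega2 4"
  unfolding T_bound_def
proof (intro allI impI)
  fix c :: nat and COL :: "(nat\<times>nat) set \<Rightarrow> nat"
  assume "1 \<le> c" and col: "COL ` nsubsets omega2 2 \<subseteq> {1..c}"
  have colb: "COL {x,y} < Suc c" if "x \<noteq> y" for x y
  proof -
    have "{x,y} \<in> nsubsets omega2 2" using that by (auto simp: nsubsets_def omega2_def)
    then show ?thesis using col by force
  qed
  define L where "L = (\<lambda>X::nat set. sorted_list_of_set X)"
  define fA where "fA = (\<lambda>X. COL {(L X!0, L X!1),(L X!2, L X!3)})"
  define fB where "fB = (\<lambda>X. COL {(L X!0, L X!2),(L X!1, L X!3)})"
  define fC where "fC = (\<lambda>X. COL {(L X!0, L X!3),(L X!1, L X!2)})"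
  define f3 where "f3 = (\<lambda>X. COL {(L X!0, L X!1),(L X!0, L X!2)})"
  obtain Y1 tA where Y1: "infinite Y1" "\<forall>X. X \<subseteq> Y1 \<and> finite X \<and> card X = 4 \<longrightarrow> fA X = tA"
    using Ramsey[of "UNIV::nat set" 4 fA "Suc c"] colb L4 unfolding fA_def L_def by auto
  obtain Y2 tB where Y2: "Y2 \<subseteq> Y1" "infinite Y2" "\<forall>X. X \<subseteq> Y2 \<and> finite X \<and> card X = 4 \<longrightarrow> fB X = tB"
    using Ramsey[of Y1 4 fB "Suc c"] Y1(1) colb L4 unfolding fB_def L_def by auto
  obtain Y3 tC where Y3: "Y3 \<subseteq> Y2" "infinite Y3" "\<forall>X. X \<subseteq> Y3 \<and> finite X \<and> card X = 4 \<longrightarrow> fC X = tC"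
    using Ramsey[of Y2 4 fC "Suc c"] Y2(2) colb L4 unfolding fC_def L_def by auto
  obtain Y4 t3 where Y4: "Y4 \<subseteq> Y3" "infinite Y4" "\<forall>X. X \<subseteq> Y4 \<and> finite X \<and> card X = 3 \<longrightarrow> f3 X = t3"
    using Ramsey[of Y3 3 f3 "Suc c"] Y3(2) colb L3 unfolding f3_def L_def by auto
  define e where "e = enumerate Y4"
  have e_sm: "strict_mono e" unfolding e_def using Y4(2) by (rule strict_mono_enumerate)
  have e_in: "e n \<in> Y4" for n unfolding e_def using Y4(2) by (rule enumerate_in_set)
  have e_less: "e m < e n \<longleftrightarrow> m < n" for m n using e_sm by (simp add: strict_mono_less)
  define h where "h = (\<lambda>(i,j). (e (2*i), e (2 * prod_encode (i,j) + 1)))"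
  have h_sm: "strict_mono h"
  proof (rule strict_monoI)
    fix p q :: "nat\<times>nat" assume "p < q"
    then show "h p < h q"
      using pe_less[of "snd p" "snd q" "fst p"]
      by (cases p, cases q) (auto simp: h_def e_less less_prod_def')
  qed
  have key: "COL {h p, h q} \<in> {t3, tA, tB, tC}" if "p < q" for p q
  proof -
    obtain i j i' j' where pq: "p = (i,j)" "q = (i',j')" by (cases p, cases q) auto
    define A where "A = 2*i"
    define B where "B = 2 * prod_encode (i,j) + 1"
    define C where "C = 2*i'"
    define D where "D = 2 * prod_encode (i',j') + 1"
    have hp: "h p = (e A, e B)" and hq: "h q = (e C, e D)" by (simp_all add: h_def pq A_def B_def C_def D_def)
    have AB: "A < B" using le_prod_encode_1[of i j] by (simp add: A_def B_def)
    have CD: "C < D" using le_prod_encode_1[of i' j'] by (simp add: C_def D_def)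
    have Y41: "Y4 \<subseteq> Y1" "Y4 \<subseteq> Y2" "Y4 \<subseteq> Y3" using Y4(1) Y3(1) Y2(1) by auto
    have sub4: "{e a, e b, e c, e d} \<subseteq> Y4" for a b c d
      using e_in by auto
    show ?thesis
    proof (cases "i = i'")
      case True
      then have "j < j'" using that pq by (simp add: less_prod_def')
      then have BD: "B < D" using pe_less[of j j' i] True by (simp add: B_def D_def)
      have "A = C" using True by (simp add: A_def C_def)
      have d: "e A < e B" "e B < e D" using AB BD e_less by auto
      have "f3 {e A, e B, e D} = t3"
        by (rule use_R[OF Y4(3)]) (use e_in d card3 in auto)
      moreover have "L {e A, e B, e D} = [e A, e B, e D]" unfolding L_def
        by (rule sorted3) (simp_all add: e_less AB BD)
      ultimately show ?thesis using hp hq \<open>A = C\<close> by (simp add: f3_def)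
    next
      case False
      then have "i < i'" using that pq by (simp add: less_prod_def')
      then have AC: "A < C" by (simp add: A_def C_def)
      have BC: "B \<noteq> C" by (simp add: B_def C_def) presburger
      have BD: "B \<noteq> D" using False by (simp add: B_def D_def)
      consider "B < C" | "C < B" "B < D" | "D < B" using BC BD by linarith
      then show ?thesis
      proof cases
        case 1
        have "fA {e A, e B, e C, e D} = tA"
          using sub4 Y41 by (intro use_R[OF Y1(2)]) (auto intro: card4 simp: e_less AB 1 CD)
        moreover have "L {e A, e B, e C, e D} = [e A, e B, e C, e D]" unfolding L_def
          by (rule sorted4) (simp_all add: e_less AB CD 1)
        ultimately show ?thesis using hp hq by (simp add: fA_def)
      next
        case 2
        have "{e A, e B, e C, e D} = {e A, e C, e B, e D}" by auto
        moreover have "fB {e A, e C, e B, e D} = tB"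
          using sub4 Y41 by (intro use_R[OF Y2(3)]) (auto intro: card4 simp: e_less AC 2)
        moreover have "L {e A, e C, e B, e D} = [e A, e C, e B, e D]" unfolding L_def
          by (rule sorted4) (simp_all add: e_less AC 2)
        ultimately show ?thesis using hp hq by (simp add: fB_def)
      next
        case 3
        have "fC {e A, e C, e D, e B} = tC"
          using sub4 Y41 by (intro use_R[OF Y3(3)]) (auto intro: card4 simp: e_less AC CD 3)
        moreover have "L {e A, e C, e D, e B} = [e A, e C, e D, e B]" unfolding L_def
          by (rule sorted4) (simp_all add: e_less AC CD 3)
        ultimately show ?thesis using hp hq by (simp add: fC_def insert_commute)
      qed
    qed
  qed
  define S' where "S' = range h"
  have inj: "inj h" using h_sm by (rule strict_mono_imp_inj_on)
  have oe: "order_equiv S' omega2"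
    unfolding order_equiv_def omega2_def S'_def
  proof (intro exI conjI)
    show "bij_betw (inv h) (range h) UNIV" using inj by (simp add: bij_betw_inv_into inj_on_imp_bij_betw)
    show "strict_mono_on (range h) (inv h)"
      unfolding strict_mono_on_def
    proof (intro allI impI)
      fix x y assume xy: "x \<in> range h \<and> y \<in> range h \<and> x < y"
      then obtain p q where pq: "x = h p" "y = h q" by auto
      then have "p < q" using xy h_sm by (simp add: strict_mono_less)
      then show "inv h x < inv h y" using pq inj by simp
    qed
  qed
  have im: "COL ` nsubsets S' 2 \<subseteq> {t3, tA, tB, tC}"
  proof
    fix v assume "v \<in> COL ` nsubsets S' 2"
    then obtain X where X: "X \<in> nsubsets S' 2" "v = COL X" by blast
    then obtain x y where xy: "X = {x,y}" "x \<noteq> y" "x \<in> S'" "y \<in> S'"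
      by (auto simp: nsubsets_def card_2_iff)
    then obtain p q where "x = h p" "y = h q" "p \<noteq> q" by (auto simp: S'_def)
    then show "v \<in> {t3, tA, tB, tC}"
      using key[of p q] key[of q p] X xy by (cases "p < q") (auto simp: insert_commute neq_iff)
  qed
  have "card (COL ` nsubsets S' 2) \<le> card {t3, tA, tB, tC}" by (rule card_mono[OF _ im]) simp
  also have "\<dots> \<le> 4" using card_length[of "[t3, tA, tB, tC]"] by simp
  finally show "\<exists>S'. S' \<subseteq> omega2 \<and> order_equiv S' omega2 \<and> card (COL ` nsubsets S' 2) \<le> 4"
    using oe by (auto simp: omega2_def)
qed

theorem theorem6p2:
  shows "T 2 omega2 = 4"
proof -
  have "(LEAST t. T_bound 2 omega2 t) = 4"
    by (rule Least_equality) (auto simp: upper lower)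
  then show ?thesis unfolding T_def using upper by (auto simp: numeral_eq_enat)
qed

end
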